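(* Let $X,Y$ be positive words and suppose $a_{ts}X\doteq a_{rq}Y$ (with $n\ge t>s\ge1$, $n\ge r>q\ge1$). Then: (I) If $t=r$ and $s=q$, then $X\doteq Y$. (II) (three distinct indices) (i) If $t=r$ and $q<s$, then $X\doteq a_{sq}Z$, $Y\doteq a_{ts}Z$ for some positive word $Z$; (ii) if $t=r$ and $s<q$, then $X\doteq a_{tq}Z$, $Y\doteq a_{qs}Z$; (iii) if $t=q$, then $X\doteq a_{rs}Z$, $Y\doteq a_{ts}Z$; (iv) if $s=r$, then $X\doteq a_{sq}Z$, $Y\doteq a_{tq}Z$; (v) if $s=q$ and $r<t$, then $X\doteq a_{tr}Z$, $Y\doteq a_{ts}Z$; (vi) if $s=q$ and $t<r$, then $X\doteq a_{rs}Z$, $Y\doteq a_{rt}Z$; in each case for some positive word $Z$. (III) If the four indices are distinct and $(t-r)(t-q)(s-r)(s-q)>0$, then $X\doteq a_{rq}Z$ and $Y\doteq a_{ts}Z$ for some positive word $Z$. (IV) If the four indices are distinct: (i) if $q<s<r<t$, then $X\doteq a_{tr}a_{sq}Z$ and $Y\doteq a_{tq}a_{rs}Z$ for some positive word $Z$; (ii) if $s<q<t<r$, then $X\doteq a_{tq}a_{rs}Z$ and $Y\doteq a_{rt}a_{qs}Z$ for some positive word $Z$.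
   Context: $B_n$ is the $n$-string braid group with band generators $a_{ts}$ ($n\ge t>s\ge1$), where $a_{ts}=(\sigma_{t-1}\cdots\sigma_{s+1})\sigma_s(\sigma_{s+1}^{-1}\cdots\sigma_{t-1}^{-1})$. The band relations are: (R1) $a_{ts}a_{rq}=a_{rq}a_{ts}$ if $(t-r)(t-q)(s-r)(s-q)>0$; (R2) $a_{ts}a_{sr}=a_{tr}a_{ts}=a_{sr}a_{tr}$ for $n\ge t>s>r\ge1$. A positive word is a word in positive powers of the $a_{ts}$. Two positive words $X,Y$ are positively equivalent, $X\doteq Y$, if one can be transformed into the other by a finite sequence of single direct applications of relations (R1), (R2) to subwords. *)

theory Defs
  imports Main
begin

text \<open>The band generator a_{ts} is represented by the pair (t,s).
  A positive word is a list of such pairs.\<close>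

type_synonym bgen = "nat \<times> nat"
type_synonym pword = "bgen list"

definition valid_gen :: "nat \<Rightarrow> bgen \<Rightarrow> bool" where
  "valid_gen n g \<longleftrightarrow> (case g of (t, s) \<Rightarrow> 1 \<le> s \<and> s < t \<and> t \<le> n)"

definition pos_word :: "nat \<Rightarrow> pword \<Rightarrow> bool" where
  "pos_word n w \<longleftrightarrow> (\<forall>g\<in>set w. valid_gen n g)"

inductive band_rel :: "nat \<Rightarrow> pword \<Rightarrow> pword \<Rightarrow> bool" for n where
  R1: "\<lbrakk>valid_gen n (t, s); valid_gen n (r, q);
        (int t - int r) * (int t - int q) * (int s - int r) * (int s - int q) > 0\<rbrakk>
       \<Longrightarrow> band_rel n [(t, s), (r, q)] [(r, q), (t, s)]"
| R2a: "\<lbrakk>n \<ge> t; t > s; s > r; r \<ge> 1\<rbrakk>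
       \<Longrightarrow> band_rel n [(t, s), (s, r)] [(t, r), (t, s)]"
| R2b: "\<lbrakk>n \<ge> t; t > s; s > r; r \<ge> 1\<rbrakk>
       \<Longrightarrow> band_rel n [(t, r), (t, s)] [(s, r), (t, r)]"

definition band_step :: "nat \<Rightarrow> pword \<Rightarrow> pword \<Rightarrow> bool" where
  "band_step n X Y \<longleftrightarrow> (\<exists>u v l r. X = u @ l @ v \<and> Y = u @ r @ v \<and>
                          (band_rel n l r \<or> band_rel n r l))"

definition pos_equiv :: "nat \<Rightarrow> pword \<Rightarrow> pword \<Rightarrow> bool" where
  "pos_equiv n = (band_step n)\<^sup>*\<^sup>*"

end

theory Submission
  imports Defs
begin

definition cF :: "bgen \<Rightarrow> bgen \<Rightarrow> pword" where
"cF a b = (case a of (t,s) \<Rightarrow> case b of (r,q) \<Rightarrow>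
  if t = r \<and> s = q then [] else
  if t = r then (if q < s then [(s,q)] else [(t,q)]) else
  if t = q then [(r,s)] else
  if s = r then [(s,q)] else
  if s = q then (if r < t then [(t,r)] else [(r,s)]) else
  if q < s \<and> s < r \<and> r < t then [(t,r),(s,q)] else
  if s < q \<and> q < t \<and> t < r then [(t,q),(r,s)] else [(r,q)])"

fun rv :: "nat \<Rightarrow> pword \<Rightarrow> pword \<Rightarrow> (pword \<times> pword) option" where
  "rv 0 u w = None"
| "rv (Suc k) [] w = Some (w, [])"
| "rv (Suc k) (a#u) [] = Some ([], a#u)"
| "rv (Suc k) (a#u) (b#w) =
     (case rv k u (cF a b) of None \<Rightarrow> None | Some (p1,q1) \<Rightarrow>
      case rv k (cF b a) w of None \<Rightarrow> None | Some (p2,q2) \<Rightarrow>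
      case rv k q1 p2 of None \<Rightarrow> None | Some (p3,q3) \<Rightarrow> Some (p1@p3, q2@q3))"

definition cube_ok :: "bgen \<Rightarrow> bgen \<Rightarrow> bgen \<Rightarrow> bool" where
"cube_ok a b c = (case (cF a c, cF c a) of ([x],[y]) \<Rightarrow> (a \<noteq> b \<and> b \<noteq> c \<longrightarrow>
   (case rv 5 [y] (cF c b) of None \<Rightarrow> False | Some (P,Q) \<Rightarrow>
   (case rv 5 (x # P) (cF a b) of None \<Rightarrow> False | Some (R1,R) \<Rightarrow>
     R1 = [] \<and> rv 5 (cF b c @ Q) (cF b a @ R) = Some ([],[])))) | _ \<Rightarrow> True)"

definition gens6 :: "bgen list" where
"gens6 = concat (map (\<lambda>t. map (\<lambda>s. (t,s)) [1..<t]) [1..<7])"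

lemma fin_check: "list_all (\<lambda>a. list_all (\<lambda>b. list_all (\<lambda>c. cube_ok a b c) gens6) gens6) gens6"
  by code_simp

lemma rel_len: "band_rel n l r \<Longrightarrow> \<exists>l1 l2 r1 r2. l = [l1,l2] \<and> r = [r1,r2]"
  by (induction rule: band_rel.induct) auto

lemma rel_valid: "band_rel n l r \<Longrightarrow> pos_word n l \<and> pos_word n r"
  by (induction rule: band_rel.induct) (auto simp: pos_word_def valid_gen_def)

lemma step_sym: "band_step n X Y \<Longrightarrow> band_step n Y X"
  unfolding band_step_def by blast

lemma step_len: "band_step n X Y \<Longrightarrow> length X = length Y"
  unfolding band_step_def using rel_len by fastforce

lemma step_valid: "band_step n X Y \<Longrightarrow> pos_word n X \<Longrightarrow> pos_word n Y"
  unfolding band_step_def pos_word_def using rel_valid unfolding pos_word_def by fastforce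

lemma step_cong: "band_step n X Y \<Longrightarrow> band_step n (u@X@v) (u@Y@v)"
  unfolding band_step_def by (metis append.assoc)

lemma pe_refl[simp]: "pos_equiv n X X"
  unfolding pos_equiv_def by simp

lemma pe_trans: "pos_equiv n X Y \<Longrightarrow> pos_equiv n Y W \<Longrightarrow> pos_equiv n X W"
  unfolding pos_equiv_def by simp

lemma pe_sym: "pos_equiv n X Y \<Longrightarrow> pos_equiv n Y X"
  unfolding pos_equiv_def
proof (induction rule: rtranclp_induct)
  case base then show ?case by simp
next
  case (step y z)
  then show ?case by (meson converse_rtranclp_into_rtranclp step_sym)
qed

lemma pe_cong: "pos_equiv n X Y \<Longrightarrow> pos_equiv n (u@X@v) (u@Y@v)"
  unfolding pos_equiv_def
proof (induction rule: rtranclp_induct)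
  case base then show ?case by simp
next
  case (step y z)
  then show ?case by (meson rtranclp.rtrancl_into_rtrancl step_cong)
qed

lemma pe_cons: "pos_equiv n X Y \<Longrightarrow> pos_equiv n (a#X) (a#Y)"
  using pe_cong[of n X Y "[a]" "[]"] by simp

lemma pe_appL: "pos_equiv n X Y \<Longrightarrow> pos_equiv n (u@X) (u@Y)"
  using pe_cong[of n X Y u "[]"] by simp

lemma pe_appR: "pos_equiv n X Y \<Longrightarrow> pos_equiv n (X@v) (Y@v)"
  using pe_cong[of n X Y "[]" v] by simp

lemma pe_len: "pos_equiv n X Y \<Longrightarrow> length X = length Y"
  unfolding pos_equiv_def by (induction rule: rtranclp_induct) (auto dest: step_len)

lemma pe_valid: "pos_equiv n X Y \<Longrightarrow> pos_word n X \<Longrightarrow> pos_word n Y"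
  unfolding pos_equiv_def by (induction rule: rtranclp_induct) (auto dest: step_valid)

lemma pe_valid': "pos_equiv n X Y \<Longrightarrow> pos_word n Y \<Longrightarrow> pos_word n X"
  using pe_valid pe_sym by blast

lemma pos_word_simps[simp]: "pos_word n [] " "pos_word n (a#X) \<longleftrightarrow> valid_gen n a \<and> pos_word n X"
  "pos_word n (X@Y) \<longleftrightarrow> pos_word n X \<and> pos_word n Y"
  by (auto simp: pos_word_def)

lemma rel_pe: "band_rel n l r \<Longrightarrow> pos_equiv n (l@v) (r@v)"
  unfolding pos_equiv_def band_step_def
  by (rule r_into_rtranclp) (metis append_Nil)

lemma R1': "valid_gen n (t,s) \<Longrightarrow> valid_gen n (r,q) \<Longrightarrow>
  (int t - int r) * (int t - int q) * (int s - int r) * (int s - int q) > 0 \<Longrightarrow>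
  pos_equiv n ((t,s)#(r,q)#v) ((r,q)#(t,s)#v)"
  using rel_pe[OF band_rel.R1, of n t s r q v] by simp

lemma R2a': "n \<ge> t \<Longrightarrow> t > s \<Longrightarrow> s > r \<Longrightarrow> r \<ge> 1 \<Longrightarrow>
  pos_equiv n ((t,s)#(s,r)#v) ((t,r)#(t,s)#v)"
  using rel_pe[OF band_rel.R2a, of t n s r v] by simp

lemma R2b': "n \<ge> t \<Longrightarrow> t > s \<Longrightarrow> s > r \<Longrightarrow> r \<ge> 1 \<Longrightarrow>
  pos_equiv n ((t,r)#(t,s)#v) ((s,r)#(t,r)#v)"
  using rel_pe[OF band_rel.R2b, of t n s r v] by simp

lemma step_front: "band_step n (a#X) (c#U) \<Longrightarrow>
  (c = a \<and> band_step n X U) \<or> (\<exists>x y V. X = x#V \<and> U = y#V \<and> (band_rel n [a,x] [c,y] \<or> band_rel n [c,y] [a,x]))"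
proof -
  assume "band_step n (a#X) (c#U)"
  then obtain u v l r where e: "a#X = u@l@v" "c#U = u@r@v" and br: "band_rel n l r \<or> band_rel n r l"
    unfolding band_step_def by blast
  obtain l1 l2 r1 r2 where lr: "l = [l1,l2]" "r = [r1,r2]" using br rel_len by blast
  show ?thesis
  proof (cases u)
    case Nil
    then show ?thesis using e br lr by auto
  next
    case (Cons u0 u')
    then have "c = a" "X = u'@l@v" "U = u'@r@v" using e by auto
    then show ?thesis using br unfolding band_step_def by blast
  qed
qed

lemma cross_neg1: "q < s \<Longrightarrow> s < r \<Longrightarrow> r < (t::nat) \<Longrightarrow>
  \<not> (int t - int r) * (int t - int q) * (int s - int r) * (int s - int q) > 0"
  by (simp add: zero_less_mult_iff mult_less_0_iff)

lemma cross_neg2: "s < q \<Longrightarrow> q < t \<Longrightarrow> t < (r::nat) \<Longrightarrow>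
  \<not> (int t - int r) * (int t - int q) * (int s - int r) * (int s - int q) > 0"
  by (simp add: zero_less_mult_iff mult_less_0_iff)

lemma prod_ne: "(int t - int r) * (int t - int q) * (int s - int r) * (int s - int q) > 0 \<Longrightarrow>
   t \<noteq> r \<and> t \<noteq> q \<and> s \<noteq> r \<and> s \<noteq> q"
  by auto

lemma noncross_pos: "s < t \<Longrightarrow> q < (r::nat) \<Longrightarrow> t \<noteq> r \<Longrightarrow> t \<noteq> q \<Longrightarrow> s \<noteq> r \<Longrightarrow> s \<noteq> q \<Longrightarrow>
  \<not> (q < s \<and> s < r \<and> r < t) \<Longrightarrow> \<not> (s < q \<and> q < t \<and> t < r) \<Longrightarrow>
  (int t - int r) * (int t - int q) * (int s - int r) * (int s - int q) > 0"
proof -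
  assume h: "s < t" "q < r" "t \<noteq> r" "t \<noteq> q" "s \<noteq> r" "s \<noteq> q"
    "\<not> (q < s \<and> s < r \<and> r < t)" "\<not> (s < q \<and> q < t \<and> t < r)"
  have e: "(int t - int r) * (int t - int q) * (int s - int r) * (int s - int q)
     = ((int t - int r) * (int s - int r)) * ((int t - int q) * (int s - int q))" by (simp add: algebra_simps)
  show ?thesis
  proof (cases "s < r \<and> r < t")
    case True
    then have "s < q" "q < t" using h by auto
    have A: "(int t - int r) * (int s - int r) < 0" using True by (simp add: mult_less_0_iff)
    have B: "(int t - int q) * (int s - int q) < 0" using `s < q` `q < t` by (simp add: mult_less_0_iff)
    show ?thesis unfolding e using A B by (simp add: mult_neg_neg)
  next
    case False
    then have r: "r < s \<or> t < r" using h by auto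
    have q: "q < s \<or> t < q" using h r by auto
    have A: "(int t - int r) * (int s - int r) > 0" using r h by (auto simp: zero_less_mult_iff)
    have B: "(int t - int q) * (int s - int q) > 0" using q h by (auto simp: zero_less_mult_iff)
    show ?thesis unfolding e using A B by simp
  qed
qed

lemma cF_valid: "valid_gen n a \<Longrightarrow> valid_gen n b \<Longrightarrow> pos_word n (cF a b)"
  by (cases a; cases b) (auto simp: cF_def valid_gen_def pos_word_def)

lemma cF_self[simp]: "cF a a = []"
  by (cases a) (simp add: cF_def)

lemma cF_basic: assumes va: "valid_gen n a" and vb: "valid_gen n b"
  shows "pos_equiv n (a # cF a b @ v) (b # cF b a @ v)"
proof -
  obtain t s where a: "a = (t,s)" by (cases a)
  obtain r q where b: "b = (r,q)" by (cases b)
  have ts: "1 \<le> s" "s < t" "t \<le> n" using va a by (auto simp: valid_gen_def)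
  have rq: "1 \<le> q" "q < r" "r \<le> n" using vb b by (auto simp: valid_gen_def)
  show ?thesis
  proof (cases "t = r \<and> s = q")
    case True then show ?thesis using a b by simp
  next
    case ne: False
    show ?thesis
    proof (cases "t = r")
      case True
      then have sq: "s \<noteq> q" using ne by simp
      show ?thesis
      proof (cases "q < s")
        case True
        then show ?thesis using a b `t = r` ts rq R2a'[of t n s q v] by (simp add: cF_def)
      next
        case False
        then have "s < q" using sq by simp
        then show ?thesis using a b `t = r` ts rq R2a'[of t n q s v] by (auto simp: cF_def intro: pe_sym)
      qed
    next
      case tr: False
      show ?thesis
      proof (cases "t = q")
        case True
        have e1: "cF a b = [(r,s)]" "cF b a = [(t,s)]" using a b tr True ts rq by (auto simp: cF_def)
        have "pos_equiv n ((r,t)#(t,s)#v) ((r,s)#(r,t)#v)" using R2a'[of r n t s v] True ts rq by simp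
        moreover have "pos_equiv n ((r,s)#(r,t)#v) ((t,s)#(r,s)#v)" using R2b'[of r n t s v] True ts rq by simp
        ultimately show ?thesis using e1 a b True by (auto intro: pe_sym pe_trans)
      next
        case tq: False
        show ?thesis
        proof (cases "s = r")
          case True
          have e1: "cF a b = [(s,q)]" "cF b a = [(t,q)]" using a b tr tq True ts rq by (auto simp: cF_def)
          have "pos_equiv n ((t,s)#(s,q)#v) ((t,q)#(t,s)#v)" using R2a'[of t n s q v] True ts rq by simp
          moreover have "pos_equiv n ((t,q)#(t,s)#v) ((s,q)#(t,q)#v)" using R2b'[of t n s q v] True ts rq by simp
          ultimately show ?thesis using e1 a b True by (auto intro: pe_sym pe_trans)
        next
          case sr: False
          show ?thesis
          proof (cases "s = q")
            case True
            show ?thesis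
            proof (cases "r < t")
              case True
              have e1: "cF a b = [(t,r)]" "cF b a = [(t,s)]" using a b tr tq sr `s = q` True ts rq by (auto simp: cF_def)
              show ?thesis using e1 a b `s = q` True ts rq R2b'[of t n r s v] by simp
            next
              case False
              then have "t < r" using tr by simp
              have e1: "cF a b = [(r,s)]" "cF b a = [(r,t)]" using a b tr tq sr `s = q` `t < r` ts rq by (auto simp: cF_def)
              show ?thesis using e1 a b `s = q` `t < r` ts rq R2b'[of r n t s v] by (auto intro: pe_sym)
            qed
          next
            case sq: False
            show ?thesis
            proof (cases "q < s \<and> s < r \<and> r < t")
              case True
              have e1: "cF a b = [(t,r),(s,q)]" "cF b a = [(r,s),(t,q)]" using a b tr tq sr sq True ts rq by (auto simp: cF_def)
              have c1: "pos_equiv n ((t,s)#(t,r)#(s,q)#v) ((r,s)#(t,s)#(s,q)#v)" using R2b'[of t n r s "(s,q)#v"] True ts rq by simp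
              have c2: "pos_equiv n ((r,s)#(t,s)#(s,q)#v) ((r,s)#(t,q)#(t,s)#v)" using pe_cons[OF R2a'[of t n s q v]] True ts rq by simp
              have c3: "pos_equiv n ((r,s)#(t,q)#(t,s)#v) ((r,s)#(s,q)#(t,q)#v)" using pe_cons[OF R2b'[of t n s q v]] True ts rq by simp
              have c4: "pos_equiv n ((r,s)#(s,q)#(t,q)#v) ((r,q)#(r,s)#(t,q)#v)" using R2a'[of r n s q "(t,q)#v"] True ts rq by simp
              have c5: "pos_equiv n ((r,q)#(t,q)#(r,s)#v) ((r,q)#(r,s)#(t,q)#v)"
                apply (rule pe_cons, rule R1') using True ts rq by (auto simp: valid_gen_def zero_less_mult_iff mult_less_0_iff)
              show ?thesis using e1 a b pe_trans[OF c1 pe_trans[OF c2 pe_trans[OF c3 c4]]] by simp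
            next
              case nc1: False
              show ?thesis
              proof (cases "s < q \<and> q < t \<and> t < r")
                case True
                have e1: "cF b a = [(r,t),(q,s)]" "cF a b = [(t,q),(r,s)]" using a b tr tq sr sq True ts rq by (auto simp: cF_def)
                have c1: "pos_equiv n ((r,q)#(r,t)#(q,s)#v) ((t,q)#(r,q)#(q,s)#v)" using R2b'[of r n t q "(q,s)#v"] True ts rq by simp
                have c2: "pos_equiv n ((t,q)#(r,q)#(q,s)#v) ((t,q)#(r,s)#(r,q)#v)" using pe_cons[OF R2a'[of r n q s v]] True ts rq by simp
                have c3: "pos_equiv n ((t,q)#(r,s)#(r,q)#v) ((t,q)#(q,s)#(r,s)#v)" using pe_cons[OF R2b'[of r n q s v]] True ts rq by simp
                have c4: "pos_equiv n ((t,q)#(q,s)#(r,s)#v) ((t,s)#(t,q)#(r,s)#v)" using R2a'[of t n q s "(r,s)#v"] True ts rq by simp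
                show ?thesis using e1 a b pe_sym[OF pe_trans[OF c1 pe_trans[OF c2 pe_trans[OF c3 c4]]]] by simp
              next
                case nc2: False
                have e1: "cF a b = [(r,q)]" "cF b a = [(t,s)]" using a b tr tq sr sq nc1 nc2 ts rq by (auto simp: cF_def)
                have "(int t - int r) * (int t - int q) * (int s - int r) * (int s - int q) > 0"
                  using noncross_pos[of s t q r] ts rq tr tq sr sq nc1 nc2 by blast
                then show ?thesis using e1 a b R1'[of n t s r q v] va vb by simp
              qed
            qed
          qed
        qed
      qed
    qed
  qed
qed

declare pe_trans[trans]

lemma prod_facts: "(int t - int r) * (int t - int q) * (int s - int r) * (int s - int q) > 0 \<Longrightarrow>
   t \<noteq> r \<and> t \<noteq> q \<and> s \<noteq> r \<and> s \<noteq> q \<and> \<not> (q < s \<and> s < r \<and> r < t) \<and> \<not> (s < q \<and> q < t \<and> t < r)"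
  using cross_neg1[of q s r t] cross_neg2[of s q t r] by auto

lemma front1: "band_rel n l r' \<Longrightarrow> l = [a,x] \<Longrightarrow> r' = [c,y] \<Longrightarrow> a \<noteq> c \<and> cF a c = [x] \<and> cF c a = [y]"
proof (induction rule: band_rel.induct)
  case (R1 t s r q)
  then have f: "t \<noteq> r \<and> t \<noteq> q \<and> s \<noteq> r \<and> s \<noteq> q \<and> \<not> (q < s \<and> s < r \<and> r < t) \<and> \<not> (s < q \<and> q < t \<and> t < r)"
    using prod_facts by blast
  then show ?case using R1 by (auto simp: cF_def)
next
  case (R2a t s r)
  then show ?case by (auto simp: cF_def)
next
  case (R2b t s r)
  then show ?case by (auto simp: cF_def)
qed

lemma front2: "band_rel n r' l \<Longrightarrow> l = [a,x] \<Longrightarrow> r' = [c,y] \<Longrightarrow> a \<noteq> c \<and> cF a c = [x] \<and> cF c a = [y]"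
  using front1 by blast

lemma rv_sound: "rv k u w = Some (p,q) \<Longrightarrow> pos_word n u \<Longrightarrow> pos_word n w \<Longrightarrow>
   pos_equiv n (u@p) (w@q) \<and> pos_word n p \<and> pos_word n q"
proof (induction k u w arbitrary: p q rule: rv.induct)
  case (1 u w) then show ?case by simp
next
  case (2 k w) then show ?case by simp
next
  case (3 k a u) then show ?case by simp
next
  case (4 k a u b w)
  from "4.prems"(1) obtain p1 q1 p2 q2 p3 q3 where
    r1: "rv k u (cF a b) = Some (p1,q1)" and r2: "rv k (cF b a) w = Some (p2,q2)"
    and r3: "rv k q1 p2 = Some (p3,q3)" and pq: "p = p1@p3" "q = q2@q3"
    by (auto split: option.splits)
  have va: "valid_gen n a" "pos_word n u" and vb: "valid_gen n b" "pos_word n w" using "4.prems" by auto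
  have i1: "pos_equiv n (u@p1) (cF a b @ q1) \<and> pos_word n p1 \<and> pos_word n q1"
    using "4.IH"(1)[OF r1] va vb cF_valid by blast
  have i2: "pos_equiv n (cF b a @ p2) (w @ q2) \<and> pos_word n p2 \<and> pos_word n q2"
    using "4.IH"(2)[OF r1 _ r2] va vb cF_valid by blast
  have i3: "pos_equiv n (q1@p3) (p2 @ q3) \<and> pos_word n p3 \<and> pos_word n q3"
    using "4.IH"(3)[OF r1 _ r2 _ r3] i1 i2 by blast
  have "pos_equiv n (a#u@p1@p3) (a#cF a b @ q1 @ p3)"
    using pe_cons[OF pe_appR[OF conjunct1[OF i1], of p3]] by simp
  also have "pos_equiv n (a#cF a b @ q1 @ p3) (b#cF b a @ q1 @ p3)"
    using cF_basic[OF va(1) vb(1)] by simp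
  also have "pos_equiv n (b#cF b a @ q1 @ p3) (b#cF b a @ p2 @ q3)"
    using pe_cons[OF pe_appL[OF conjunct1[OF i3], of "cF b a"]] by simp
  also have "pos_equiv n (b#cF b a @ p2 @ q3) (b#w@q2@q3)"
    using pe_cons[OF pe_appR[OF conjunct1[OF i2], of q3]] by simp
  finally show ?case using pq i1 i2 i3 by simp
qed

definition HH :: "nat \<Rightarrow> nat \<Rightarrow> bool" where
"HH n L = (\<forall>a b X Y. length X < L \<longrightarrow> valid_gen n a \<longrightarrow> valid_gen n b \<longrightarrow> pos_word n X \<longrightarrow> pos_word n Y
   \<longrightarrow> pos_equiv n (a#X) (b#Y) \<longrightarrow> (\<exists>Z. pos_equiv n X (cF a b @ Z) \<and> pos_equiv n Y (cF b a @ Z)))"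

lemma rv_div: "HH n L \<Longrightarrow> rv k u w = Some (p,q) \<Longrightarrow> length (u@V) \<le> L \<Longrightarrow> pos_word n (u@V) \<Longrightarrow>
  pos_word n (w@Y) \<Longrightarrow> pos_equiv n (u@V) (w@Y) \<Longrightarrow> \<exists>Z. pos_equiv n V (p@Z) \<and> pos_equiv n Y (q@Z)"
proof (induction k u w arbitrary: p q V Y rule: rv.induct)
  case (1 u w) then show ?case by simp
next
  case (2 k w) then show ?case by (intro exI[of _ Y]) simp
next
  case (3 k a u) then show ?case by (intro exI[of _ V]) (auto intro: pe_sym)
next
  case (4 k a u b w)
  from "4.prems"(2) obtain p1 q1 p2 q2 p3 q3 where
    r1: "rv k u (cF a b) = Some (p1,q1)" and r2: "rv k (cF b a) w = Some (p2,q2)"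
    and r3: "rv k q1 p2 = Some (p3,q3)" and pq: "p = p1@p3" "q = q2@q3"
    by (auto split: option.splits)
  have va: "valid_gen n a" "pos_word n (u@V)" and vb: "valid_gen n b" "pos_word n (w@Y)"
    using "4.prems" by auto
  have len: "length (u@V) < L" using "4.prems"(3) by simp
  have e: "pos_equiv n (a#(u@V)) (b#(w@Y))" using "4.prems"(6) by simp
  obtain Z0 where z0: "pos_equiv n (u@V) (cF a b @ Z0)" "pos_equiv n (w@Y) (cF b a @ Z0)"
    using "4.prems"(1) len va vb e unfolding HH_def by blast
  have vz0: "pos_word n (cF a b @ Z0)" "pos_word n (cF b a @ Z0)" using z0 va vb pe_valid by blast+
  have l0: "length (u@V) = length (w@Y)" using pe_len[OF e] by simp
  obtain Z1 where z1: "pos_equiv n V (p1@Z1)" "pos_equiv n Z0 (q1@Z1)"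
    using "4.IH"(1)[OF "4.prems"(1) r1 _ va(2) vz0(1) z0(1)] "4.prems"(3) by auto
  obtain Z2 where z2: "pos_equiv n Z0 (p2@Z2)" "pos_equiv n Y (q2@Z2)"
    using "4.IH"(2)[OF r1 _ "4.prems"(1) r2 _ vz0(2) vb(2) pe_sym[OF z0(2)]] "4.prems"(3) l0 pe_len[OF z0(2)]
    by auto
  have vq1: "pos_word n (q1@Z1)" using pe_valid[OF z1(2)] vz0 by simp
  have vp2: "pos_word n (p2@Z2)" using pe_valid[OF z2(1)] vz0 by simp
  have e3: "pos_equiv n (q1@Z1) (p2@Z2)" using z1(2) z2(1) by (meson pe_sym pe_trans)
  have l3: "length (q1@Z1) \<le> L" using pe_len[OF z1(2)] pe_len[OF z0(1)] len by simp
  obtain Z3 where z3: "pos_equiv n Z1 (p3@Z3)" "pos_equiv n Z2 (q3@Z3)"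
    using "4.IH"(3)[OF r1 _ r2 _ "4.prems"(1) r3 l3 vq1 vp2 e3] by auto
  have "pos_equiv n V (p1@p3@Z3)" using z1(1) pe_appL[OF z3(1), of p1] by (meson pe_trans)
  moreover have "pos_equiv n Y (q2@q3@Z3)" using z2(2) pe_appL[OF z3(2), of q2] by (meson pe_trans)
  ultimately show ?case using pq by auto
qed

definition ind :: "pword \<Rightarrow> nat set" where "ind w = fst ` set w \<union> snd ` set w"
definition mg :: "(nat \<Rightarrow> nat) \<Rightarrow> bgen \<Rightarrow> bgen" where "mg h g = (h (fst g), h (snd g))"
definition emb :: "(nat \<Rightarrow> nat) \<Rightarrow> nat set \<Rightarrow> bool" where
  "emb h I = (\<forall>x\<in>I. \<forall>y\<in>I. (h x < h y \<longleftrightarrow> x < y))"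

lemma ind_simps[simp]: "ind [] = {}" "ind (a#w) = {fst a, snd a} \<union> ind w" "ind (u@w) = ind u \<union> ind w"
  by (auto simp: ind_def)

lemma emb_less: "emb h I \<Longrightarrow> x\<in>I \<Longrightarrow> y\<in>I \<Longrightarrow> (h x < h y) = (x<y)"
  by (auto simp: emb_def)

lemma emb_eq: "emb h I \<Longrightarrow> x\<in>I \<Longrightarrow> y\<in>I \<Longrightarrow> (h x = h y) = (x=y)"
  unfolding emb_def by (metis less_irrefl linorder_neq_iff)

lemma mg_pair[simp]: "mg h (t,s) = (h t, h s)" by (simp add: mg_def)

lemma cF_ind: "ind (cF a b) \<subseteq> ind [a,b]"
  by (cases a; cases b) (auto simp: cF_def)

lemma cF_map: assumes "emb h I" "ind [a,b] \<subseteq> I"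
  shows "cF (mg h a) (mg h b) = map (mg h) (cF a b)"
proof -
  obtain t s where a: "a = (t,s)" by (cases a)
  obtain r q where b: "b = (r,q)" by (cases b)
  have m: "t \<in> I" "s \<in> I" "r \<in> I" "q \<in> I" using assms(2) a b by auto
  note L = emb_less[OF assms(1)] and E = emb_eq[OF assms(1)]
  show ?thesis unfolding a b using m by (simp add: cF_def L E)
qed

lemma rv_ind: "rv k u w = Some (p,q) \<Longrightarrow> ind p \<union> ind q \<subseteq> ind u \<union> ind w"
proof (induction k u w arbitrary: p q rule: rv.induct)
  case (4 k a u b w)
  from "4.prems"(1) obtain p1 q1 p2 q2 p3 q3 where
    r1: "rv k u (cF a b) = Some (p1,q1)" and r2: "rv k (cF b a) w = Some (p2,q2)"
    and r3: "rv k q1 p2 = Some (p3,q3)" and pq: "p = p1@p3" "q = q2@q3"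
    by (auto split: option.splits)
  have i1: "ind p1 \<union> ind q1 \<subseteq> ind u \<union> ind (cF a b)" using "4.IH"(1)[OF r1] .
  have i2: "ind p2 \<union> ind q2 \<subseteq> ind (cF b a) \<union> ind w" using "4.IH"(2)[OF r1 _ r2] by simp
  have i3: "ind p3 \<union> ind q3 \<subseteq> ind q1 \<union> ind p2" using "4.IH"(3)[OF r1 _ r2 _ r3] by simp
  have c1: "ind (cF a b) \<subseteq> ind (a#u) \<union> ind (b#w)" "ind (cF b a) \<subseteq> ind (a#u) \<union> ind (b#w)"
    using cF_ind[of a b] cF_ind[of b a] by auto
  have "ind p \<union> ind q \<subseteq> ind u \<union> ind w \<union> ind (cF a b) \<union> ind (cF b a)"
    unfolding pq ind_simps(3) using i1 i2 i3 by blast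
  then show ?case using c1 by auto
qed auto

lemma rv_map: "emb h I \<Longrightarrow> ind u \<subseteq> I \<Longrightarrow> ind w \<subseteq> I \<Longrightarrow>
  rv k (map (mg h) u) (map (mg h) w) = map_option (map_prod (map (mg h)) (map (mg h))) (rv k u w)"
proof (induction k u w rule: rv.induct)
  case (4 k a u b w)
  have cab: "cF (mg h a) (mg h b) = map (mg h) (cF a b)" "cF (mg h b) (mg h a) = map (mg h) (cF b a)"
    using cF_map[OF "4.prems"(1), of a b] cF_map[OF "4.prems"(1), of b a] "4.prems" by auto
  have iab: "ind (cF a b) \<subseteq> I" "ind (cF b a) \<subseteq> I" using cF_ind[of a b] cF_ind[of b a] "4.prems" by auto
  have IH1: "rv k (map (mg h) u) (map (mg h) (cF a b)) = map_option (map_prod (map (mg h)) (map (mg h))) (rv k u (cF a b))"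
    using "4.IH"(1) "4.prems" iab by auto
  show ?case
  proof (cases "rv k u (cF a b)")
    case None then show ?thesis using IH1 cab by simp
  next
    case (Some x1)
    obtain p1 q1 where x1: "x1 = (p1,q1)" by (cases x1)
    have i1: "ind q1 \<subseteq> I" using rv_ind[of k u "cF a b" p1 q1] Some x1 iab "4.prems" by auto
    have IH2: "rv k (map (mg h) (cF b a)) (map (mg h) w) = map_option (map_prod (map (mg h)) (map (mg h))) (rv k (cF b a) w)"
      using "4.IH"(2)[OF Some x1[symmetric]] "4.prems" iab by auto
    show ?thesis
    proof (cases "rv k (cF b a) w")
      case None then show ?thesis using IH1 IH2 cab Some x1 by simp
    next
      case (Some x2)
      obtain p2 q2 where x2: "x2 = (p2,q2)" by (cases x2)
      have i2: "ind p2 \<subseteq> I" using rv_ind[of k "cF b a" w p2 q2] Some x2 iab "4.prems" by auto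
      have IH3: "rv k (map (mg h) q1) (map (mg h) p2) = map_option (map_prod (map (mg h)) (map (mg h))) (rv k q1 p2)"
        using "4.IH"(3)[OF `rv k u (cF a b) = Some x1` x1[symmetric] Some x2[symmetric]] "4.prems" i1 i2 by auto
      show ?thesis
        using IH1 IH2 IH3 cab `rv k u (cF a b) = Some x1` x1 Some x2
        by (cases "rv k q1 p2") auto
    qed
  qed
qed auto

lemma gens6_mem: "valid_gen 6 g \<Longrightarrow> g \<in> set gens6"
proof -
  assume v: "valid_gen 6 g"
  obtain a b where g: "g = (a,b)" by (cases g)
  have "1 \<le> b" "b < a" "a \<le> 6" using v g by (auto simp: valid_gen_def)
  then have "\<exists>x\<in>{1..<7}. (a, b) \<in> Pair x ` {1..<x}" by (intro bexI[of _ a]) auto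
  then show ?thesis using g by (simp add: gens6_def)
qed

lemma rank_emb: assumes "finite (I::nat set)" shows "emb (\<lambda>z. card {w\<in>I. w < z} + 1) I"
  unfolding emb_def
proof (intro ballI)
  fix x y assume xy: "x \<in> I" "y \<in> I"
  show "(card {w\<in>I. w < x} + 1 < card {w\<in>I. w < y} + 1) = (x < y)"
  proof
    assume "card {w\<in>I. w < x} + 1 < card {w\<in>I. w < y} + 1"
    then show "x < y"
    proof (rule contrapos_pp)
      assume "\<not> x < y"
      then have "{w\<in>I. w < y} \<subseteq> {w\<in>I. w < x}" by auto
      then have "card {w\<in>I. w < y} \<le> card {w\<in>I. w < x}" using assms by (intro card_mono) auto
      then show "\<not> card {w\<in>I. w < x} + 1 < card {w\<in>I. w < y} + 1" by simp
    qed
  next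
    assume "x < y"
    then have "{w\<in>I. w < x} \<subset> {w\<in>I. w < y}" using xy by auto
    then have "card {w\<in>I. w < x} < card {w\<in>I. w < y}" using assms by (intro psubset_card_mono) auto
    then show "card {w\<in>I. w < x} + 1 < card {w\<in>I. w < y} + 1" by simp
  qed
qed

lemma rank_le: assumes "finite (I::nat set)" "x \<in> I" shows "card {w\<in>I. w < x} + 1 \<le> card I"
proof -
  have "x \<notin> {w\<in>I. w < x}" by blast
  then have "{w\<in>I. w < x} \<subset> I" using assms(2) by blast
  then have "card {w\<in>I. w < x} < card I" using assms by (intro psubset_card_mono) auto
  then show ?thesis by simp
qed

lemma map_mg_inj: "emb h I \<Longrightarrow> ind u \<subseteq> I \<Longrightarrow> ind w \<subseteq> I \<Longrightarrow> map (mg h) u = map (mg h) w \<Longrightarrow> u = w"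
proof (induction u arbitrary: w)
  case Nil then show ?case by simp
next
  case (Cons a u)
  then obtain b w' where w: "w = b # w'" by (cases w) auto
  obtain t s where a: "a = (t,s)" by (cases a)
  obtain r q where b: "b = (r,q)" by (cases b)
  have e: "h t = h r" "h s = h q" "map (mg h) u = map (mg h) w'" using Cons.prems(4) w a b by auto
  have m: "t \<in> I" "s \<in> I" "r \<in> I" "q \<in> I" using Cons.prems(2,3) w a b by auto
  have "t = r" "s = q" using e(1,2) emb_eq[OF Cons.prems(1)] m by blast+
  moreover have "u = w'" using Cons.IH[OF Cons.prems(1) _ _ e(3)] Cons.prems(2,3) w by simp
  ultimately show ?case using w a b by simp
qed

lemma cube: assumes va: "valid_gen n a" and vb: "valid_gen n b" and vc: "valid_gen n c"
  and ab: "a \<noteq> b" and bc: "b \<noteq> c" and x: "cF a c = [x]" and y: "cF c a = [y]"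
  shows "\<exists>P Q R. rv 5 [y] (cF c b) = Some (P,Q) \<and> rv 5 (x#P) (cF a b) = Some ([],R)
     \<and> rv 5 (cF b c @ Q) (cF b a @ R) = Some ([],[])"
proof -
  define I where "I = ind [a,b,c]"
  define h where "h = (\<lambda>z. card {w\<in>I. w < z} + 1)"
  have fI: "finite I" unfolding I_def ind_def by simp
  have em: "emb h I" unfolding h_def using rank_emb[OF fI] .
  have cI: "card I \<le> 6"
  proof -
    have "I = set [fst a, snd a, fst b, snd b, fst c, snd c]" unfolding I_def by auto
    then show ?thesis using card_length[of "[fst a, snd a, fst b, snd b, fst c, snd c]"] by simp
  qed
  have hle: "\<And>z. z \<in> I \<Longrightarrow> h z \<le> 6" unfolding h_def using rank_le[OF fI] cI le_trans by blast
  have hge: "\<And>z. 1 \<le> h z" unfolding h_def by simp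
  have v6: "valid_gen 6 (mg h g)" if "valid_gen n g" "ind [g] \<subseteq> I" for g
  proof -
    obtain t s where g: "g = (t,s)" by (cases g)
    have "s < t" "t \<in> I" "s \<in> I" using that g by (auto simp: valid_gen_def)
    then show ?thesis using g hle hge emb_less[OF em] by (auto simp: valid_gen_def)
  qed
  have iA: "ind [a] \<subseteq> I" "ind [b] \<subseteq> I" "ind [c] \<subseteq> I" "ind [a,b] \<subseteq> I" "ind [b,a] \<subseteq> I"
     "ind [c,a] \<subseteq> I" "ind [a,c] \<subseteq> I" "ind [c,b] \<subseteq> I" "ind [b,c] \<subseteq> I" unfolding I_def by auto
  have iF: "ind (cF u v) \<subseteq> I" if "ind [u,v] \<subseteq> I" for u v using cF_ind[of u v] that by blast
  have ok: "cube_ok (mg h a) (mg h b) (mg h c)"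
  proof -
    have "\<forall>a\<in>set gens6. \<forall>b\<in>set gens6. \<forall>c\<in>set gens6. cube_ok a b c"
      using fin_check unfolding list_all_iff .
    then show ?thesis using gens6_mem[OF v6[OF va iA(1)]] gens6_mem[OF v6[OF vb iA(2)]] gens6_mem[OF v6[OF vc iA(3)]]
      by blast
  qed
  have fx: "cF (mg h a) (mg h c) = [mg h x]" using cF_map[OF em iA(7)] x by simp
  have fy: "cF (mg h c) (mg h a) = [mg h y]" using cF_map[OF em iA(6)] y by simp
  have ab': "mg h a \<noteq> mg h b" using map_mg_inj[OF em iA(1) iA(2), of] ab by auto
  have bc': "mg h b \<noteq> mg h c" using map_mg_inj[OF em iA(2) iA(3), of] bc by auto
  have iy: "ind [y] \<subseteq> I" using iF[OF iA(6)] y by simp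
  have ix: "ind [x] \<subseteq> I" using iF[OF iA(7)] x by simp
  let ?M = "map_prod (map (mg h)) (map (mg h))"
  have r1: "rv 5 [mg h y] (cF (mg h c) (mg h b)) = map_option ?M (rv 5 [y] (cF c b))"
    using rv_map[OF em iy iF[OF iA(8)], of 5] cF_map[OF em iA(8)] by simp
  have ok2: "case rv 5 [mg h y] (cF (mg h c) (mg h b)) of None \<Rightarrow> False | Some (P,Q) \<Rightarrow>
   (case rv 5 (mg h x # P) (cF (mg h a) (mg h b)) of None \<Rightarrow> False | Some (R1,R) \<Rightarrow>
     R1 = [] \<and> rv 5 (cF (mg h b) (mg h c) @ Q) (cF (mg h b) (mg h a) @ R) = Some ([],[]))"
    using ok fx fy ab' bc' unfolding cube_ok_def by simp
  obtain P Q where PQ: "rv 5 [y] (cF c b) = Some (P,Q)"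
  proof (cases "rv 5 [y] (cF c b)")
    case None then show ?thesis using ok2 r1 by simp
  next
    case (Some pq) then show ?thesis using that by (cases pq) auto
  qed
  have ok3: "case rv 5 (mg h x # map (mg h) P) (cF (mg h a) (mg h b)) of None \<Rightarrow> False | Some (R1,R) \<Rightarrow>
     R1 = [] \<and> rv 5 (cF (mg h b) (mg h c) @ map (mg h) Q) (cF (mg h b) (mg h a) @ R) = Some ([],[])"
    using ok2 r1 PQ by simp
  have iPQ: "ind P \<subseteq> I" "ind Q \<subseteq> I" using rv_ind[OF PQ] iy iF[OF iA(8)] by auto
  have r2: "rv 5 (mg h x # map (mg h) P) (cF (mg h a) (mg h b)) = map_option ?M (rv 5 (x#P) (cF a b))"
    using rv_map[OF em _ iF[OF iA(4)], of "x#P" 5] cF_map[OF em iA(4)] ix iPQ by simp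
  obtain R1 R where R: "rv 5 (x#P) (cF a b) = Some (R1,R)"
  proof (cases "rv 5 (x#P) (cF a b)")
    case None then show ?thesis using ok3 r2 by simp
  next
    case (Some pq) then show ?thesis using that by (cases pq) auto
  qed
  have ok4: "map (mg h) R1 = [] \<and> rv 5 (cF (mg h b) (mg h c) @ map (mg h) Q) (cF (mg h b) (mg h a) @ map (mg h) R) = Some ([],[])"
    using ok3 r2 R by simp
  then have R1: "R1 = []" by simp
  have iR: "ind R \<subseteq> I" using rv_ind[OF R] ix iPQ iF[OF iA(4)] by auto
  have r3: "rv 5 (cF (mg h b) (mg h c) @ map (mg h) Q) (cF (mg h b) (mg h a) @ map (mg h) R)
     = map_option ?M (rv 5 (cF b c @ Q) (cF b a @ R))"
    using rv_map[OF em _ _, of "cF b c @ Q" "cF b a @ R" 5] cF_map[OF em iA(9)] cF_map[OF em iA(5)]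
      iF[OF iA(9)] iF[OF iA(5)] iPQ iR by simp
  have "map_option ?M (rv 5 (cF b c @ Q) (cF b a @ R)) = Some ([],[])" using ok4 r3 by simp
  then have "rv 5 (cF b c @ Q) (cF b a @ R) = Some ([],[])" by (auto split: option.splits)
  then show ?thesis using PQ R R1 by blast
qed

lemma chain: assumes H: "HH n L" and ch: "(band_step n)\<^sup>*\<^sup>* W W'"
  shows "\<forall>a X b Y. W = a#X \<longrightarrow> W' = b#Y \<longrightarrow> length X = L \<longrightarrow> pos_word n W \<longrightarrow>
     (\<exists>Z. pos_equiv n X (cF a b @ Z) \<and> pos_equiv n Y (cF b a @ Z))"
  using ch
proof (induction rule: converse_rtranclp_induct)
  case base
  show ?case
  proof (intro allI impI)
    fix a X b Y assume "W' = a#X" "W' = b#Y"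
    then show "\<exists>Z. pos_equiv n X (cF a b @ Z) \<and> pos_equiv n Y (cF b a @ Z)"
      by (intro exI[of _ X]) simp
  qed
next
  case (step W W1)
  show ?case
  proof (intro allI impI)
    fix a X b Y
    assume W: "W = a#X" and W': "W' = b#Y" and lX: "length X = L" and vW: "pos_word n W"
    have l1: "length W1 = length W" using step_len[OF step.hyps(1)] by simp
    then obtain c U where W1: "W1 = c#U" using W by (cases W1) auto
    have lU: "length U = L" using l1 W W1 lX by simp
    have vW1: "pos_word n W1" using step_valid[OF step.hyps(1) vW] .
    obtain Z1 where z1: "pos_equiv n U (cF c b @ Z1)" "pos_equiv n Y (cF b c @ Z1)"
      using step.IH W1 W' lU vW1 by blast
    have st: "band_step n (a#X) (c#U)" using step.hyps(1) W W1 by simp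
    have va: "valid_gen n a" "pos_word n X" using vW W by auto
    have vc: "valid_gen n c" "pos_word n U" using vW1 W1 by auto
    have vW': "pos_word n W'" using vW1 step.hyps(2) unfolding pos_equiv_def[symmetric] using pe_valid by blast
    have vb: "valid_gen n b" "pos_word n Y" using vW' W' by auto
    from step_front[OF st] show "\<exists>Z. pos_equiv n X (cF a b @ Z) \<and> pos_equiv n Y (cF b a @ Z)"
    proof
      assume "c = a \<and> band_step n X U"
      then have "c = a" "pos_equiv n X U" unfolding pos_equiv_def by auto
      then show ?thesis using z1 by (meson pe_trans)
    next
      assume "\<exists>x y V. X = x#V \<and> U = y#V \<and> (band_rel n [a,x] [c,y] \<or> band_rel n [c,y] [a,x])"
      then obtain x y V where X: "X = x#V" and U: "U = y#V" and r: "band_rel n [a,x] [c,y] \<or> band_rel n [c,y] [a,x]"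
        by blast
      have f: "a \<noteq> c" "cF a c = [x]" "cF c a = [y]" using r front1 front2 by blast+
      have vV: "pos_word n V" "valid_gen n x" "valid_gen n y" using va vc X U by auto
      have lV: "length V < L" using lX X by simp
      show ?thesis
      proof (cases "b = a")
        case True
        have e: "pos_equiv n (y#V) (y#Z1)" using z1(1) U True f by simp
        have vZ1: "pos_word n Z1" using pe_valid[OF z1(1)] vc U True f by simp
        obtain Z' where "pos_equiv n V ([] @ Z')" "pos_equiv n Z1 ([] @ Z')"
          using H lV vV vZ1 e unfolding HH_def by (metis cF_self)
        then have "pos_equiv n V Z1" by (meson pe_sym pe_trans append_Nil)
        then have "pos_equiv n Y X" using z1(2) True f X by (metis append_Cons append_Nil pe_cons pe_sym pe_trans)
        then show ?thesis using True by (intro exI[of _ X]) (auto intro: pe_sym)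
      next
        case ba: False
        show ?thesis
        proof (cases "b = c")
          case True
          have "pos_equiv n Y U" using z1 True by (metis cF_self append_Nil pe_sym pe_trans)
          then show ?thesis using True X U f by (intro exI[of _ V]) simp
        next
          case bc: False
          obtain P Q R where PQ: "rv 5 [y] (cF c b) = Some (P,Q)" and R: "rv 5 (x#P) (cF a b) = Some ([],R)"
            and F: "rv 5 (cF b c @ Q) (cF b a @ R) = Some ([],[])"
            using cube[OF va(1) vb(1) vc(1) _ bc f(2) f(3)] ba by metis
          have vF: "pos_word n (cF c b @ Z1)" using pe_valid[OF z1(1)] vc by simp
          obtain Z2 where z2: "pos_equiv n V (P@Z2)" "pos_equiv n Z1 (Q@Z2)"
            using rv_div[OF H PQ, of V Z1] U z1(1) lU vc vF by auto
          have s1: "pos_word n P" "pos_word n Q" using rv_sound[OF PQ] vV vc vb cF_valid by auto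
          have s2: "pos_equiv n (x#P) (cF a b @ R)" using rv_sound[OF R] vV s1 va vb cF_valid by auto
          have vR: "pos_word n R" using rv_sound[OF R] vV s1 va vb cF_valid by auto
          have s3: "pos_equiv n (cF b c @ Q) (cF b a @ R)" using rv_sound[OF F] s1 vR va vb vc cF_valid by auto
          have "pos_equiv n X (x#P@Z2)" using X pe_cons[OF z2(1)] by simp
          also have "pos_equiv n (x#P@Z2) (cF a b @ R @ Z2)" using pe_appR[OF s2, of Z2] by simp
          finally have A: "pos_equiv n X (cF a b @ R @ Z2)" .
          have "pos_equiv n Y (cF b c @ Q @ Z2)" using z1(2) pe_appL[OF z2(2), of "cF b c"] by (meson pe_trans)
          also have "pos_equiv n (cF b c @ Q @ Z2) (cF b a @ R @ Z2)" using pe_appR[OF s3, of Z2] by simp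
          finally have B: "pos_equiv n Y (cF b a @ R @ Z2)" .
          show ?thesis using A B by blast
        qed
      qed
    qed
  qed
qed

lemma main_gen: "valid_gen n a \<Longrightarrow> valid_gen n b \<Longrightarrow> pos_word n X \<Longrightarrow> pos_word n Y \<Longrightarrow>
  pos_equiv n (a#X) (b#Y) \<Longrightarrow> \<exists>Z. pos_equiv n X (cF a b @ Z) \<and> pos_equiv n Y (cF b a @ Z)"
proof (induction "length X" arbitrary: a b X Y rule: less_induct)
  case less
  have H: "HH n (length X)" unfolding HH_def using less.hyps by blast
  show ?case using chain[OF H less.prems(5)[unfolded pos_equiv_def]] less.prems by auto
qed

theorem theorem2p3:
  fixes n t s r q :: nat and X Y :: pword
  assumes "pos_word n X" and "pos_word n Y"
    and "n \<ge> t" and "t > s" and "s \<ge> 1"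
    and "n \<ge> r" and "r > q" and "q \<ge> 1"
    and "pos_equiv n ((t, s) # X) ((r, q) # Y)"
  shows
    "(t = r \<and> s = q \<longrightarrow> pos_equiv n X Y)
   \<and> (t = r \<and> q < s \<longrightarrow> (\<exists>Z. pos_word n Z \<and>
          pos_equiv n X ((s, q) # Z) \<and> pos_equiv n Y ((t, s) # Z)))
   \<and> (t = r \<and> s < q \<longrightarrow> (\<exists>Z. pos_word n Z \<and>
          pos_equiv n X ((t, q) # Z) \<and> pos_equiv n Y ((q, s) # Z)))
   \<and> (t = q \<longrightarrow> (\<exists>Z. pos_word n Z \<and>
          pos_equiv n X ((r, s) # Z) \<and> pos_equiv n Y ((t, s) # Z)))
   \<and> (s = r \<longrightarrow> (\<exists>Z. pos_word n Z \<and>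
          pos_equiv n X ((s, q) # Z) \<and> pos_equiv n Y ((t, q) # Z)))
   \<and> (s = q \<and> r < t \<longrightarrow> (\<exists>Z. pos_word n Z \<and>
          pos_equiv n X ((t, r) # Z) \<and> pos_equiv n Y ((t, s) # Z)))
   \<and> (s = q \<and> t < r \<longrightarrow> (\<exists>Z. pos_word n Z \<and>
          pos_equiv n X ((r, s) # Z) \<and> pos_equiv n Y ((r, t) # Z)))
   \<and> (distinct [t, s, r, q] \<and>
        (int t - int r) * (int t - int q) * (int s - int r) * (int s - int q) > 0
        \<longrightarrow> (\<exists>Z. pos_word n Z \<and>
          pos_equiv n X ((r, q) # Z) \<and> pos_equiv n Y ((t, s) # Z)))
   \<and> (q < s \<and> s < r \<and> r < t \<longrightarrow> (\<exists>Z. pos_word n Z \<and>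
          pos_equiv n X ((t, r) # (s, q) # Z) \<and> pos_equiv n Y ((t, q) # (r, s) # Z)))
   \<and> (s < q \<and> q < t \<and> t < r \<longrightarrow> (\<exists>Z. pos_word n Z \<and>
          pos_equiv n X ((t, q) # (r, s) # Z) \<and> pos_equiv n Y ((r, t) # (q, s) # Z)))"
proof -
  have va: "valid_gen n (t,s)" and vb: "valid_gen n (r,q)" using assms by (auto simp: valid_gen_def)
  obtain Z where z: "pos_equiv n X (cF (t,s) (r,q) @ Z)" "pos_equiv n Y (cF (r,q) (t,s) @ Z)"
    using main_gen[OF va vb assms(1,2,9)] by blast
  have vZ: "pos_word n Z" using pe_valid[OF z(1) assms(1)] by simp
  have ts: "s < t" "q < r" using assms by auto
  show ?thesis
  proof (intro conjI impI)
    assume "t = r \<and> s = q"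
    then show "pos_equiv n X Y" using z by (auto intro: pe_sym pe_trans)
  next
    assume h: "t = r \<and> q < s"
    then show "\<exists>Z. pos_word n Z \<and> pos_equiv n X ((s, q) # Z) \<and> pos_equiv n Y ((t, s) # Z)"
      using z vZ ts by (intro exI[of _ Z]) (auto simp: cF_def)
  next
    assume h: "t = r \<and> s < q"
    then show "\<exists>Z. pos_word n Z \<and> pos_equiv n X ((t, q) # Z) \<and> pos_equiv n Y ((q, s) # Z)"
      using z vZ ts by (intro exI[of _ Z]) (auto simp: cF_def)
  next
    assume h: "t = q"
    then show "\<exists>Z. pos_word n Z \<and> pos_equiv n X ((r, s) # Z) \<and> pos_equiv n Y ((t, s) # Z)"
      using z vZ ts by (intro exI[of _ Z]) (auto simp: cF_def)
  next
    assume h: "s = r"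
    then show "\<exists>Z. pos_word n Z \<and> pos_equiv n X ((s, q) # Z) \<and> pos_equiv n Y ((t, q) # Z)"
      using z vZ ts by (intro exI[of _ Z]) (auto simp: cF_def)
  next
    assume h: "s = q \<and> r < t"
    then show "\<exists>Z. pos_word n Z \<and> pos_equiv n X ((t, r) # Z) \<and> pos_equiv n Y ((t, s) # Z)"
      using z vZ ts by (intro exI[of _ Z]) (auto simp: cF_def)
  next
    assume h: "s = q \<and> t < r"
    then show "\<exists>Z. pos_word n Z \<and> pos_equiv n X ((r, s) # Z) \<and> pos_equiv n Y ((r, t) # Z)"
      using z vZ ts by (intro exI[of _ Z]) (auto simp: cF_def)
  next
    assume h: "distinct [t, s, r, q] \<and>
        (int t - int r) * (int t - int q) * (int s - int r) * (int s - int q) > 0"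
    then have f: "t \<noteq> r \<and> t \<noteq> q \<and> s \<noteq> r \<and> s \<noteq> q \<and> \<not> (q < s \<and> s < r \<and> r < t) \<and> \<not> (s < q \<and> q < t \<and> t < r)"
      using prod_facts by blast
    then show "\<exists>Z. pos_word n Z \<and> pos_equiv n X ((r, q) # Z) \<and> pos_equiv n Y ((t, s) # Z)"
      using z vZ ts by (intro exI[of _ Z]) (auto simp: cF_def)
  next
    assume h: "q < s \<and> s < r \<and> r < t"
    have e1: "cF (t,s) (r,q) = [(t,r),(s,q)]" "cF (r,q) (t,s) = [(r,s),(t,q)]" using h by (auto simp: cF_def)
    have c: "pos_equiv n ((r,s)#(t,q)#Z) ((t,q)#(r,s)#Z)"
      apply (rule R1') using h assms by (auto simp: valid_gen_def zero_less_mult_iff mult_less_0_iff)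
    show "\<exists>Z. pos_word n Z \<and> pos_equiv n X ((t, r) # (s, q) # Z) \<and> pos_equiv n Y ((t, q) # (r, s) # Z)"
      using z vZ e1 c by (intro exI[of _ Z]) (auto intro: pe_trans)
  next
    assume h: "s < q \<and> q < t \<and> t < r"
    then show "\<exists>Z. pos_word n Z \<and> pos_equiv n X ((t, q) # (r, s) # Z) \<and> pos_equiv n Y ((r, t) # (q, s) # Z)"
      using z vZ ts by (intro exI[of _ Z]) (auto simp: cF_def)
  qed
qed

end
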